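(* A prime tournament $G$ with $|V(G)| \ge 3$ does not have a subtournament isomorphic to $D_4$ if and only if $G$ is isomorphic to $T_n$ for some odd $n \ge 3$.
   Context: A tournament is a finite, non-null, loopless directed graph in which for any two distinct vertices $u,v$ there is exactly one edge with both ends in $\{u,v\}$; write $u\to v$ for the edge from $u$ to $v$. A subtournament is the tournament induced on a nonempty vertex subset. A homogeneous set of $G$ is a set $X\subseteq V(G)$ such that each $v\in V(G)\setminus X$ either has $v\to x$ for all $x\in X$ or $x\to v$ for all $x \in X$; $G$ is prime if every homogeneous set $X$ has $|X|\le 1$ or $X=V(G)$. $D_4$ is the 4-vertex tournament consisting of a cyclic triangle $C$ and a vertex $v$ with $v \to c$ for every vertex $c$ of $C$. For $n=2k+1$, $T_n$ is the tournament on $v_1,\dots,v_n$ with $v_i\to v_j$ iff $j\equiv i+1,\dots,i+k \pmod n$. *)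

theory Defs
  imports Main
begin

text \<open>A tournament is given by a finite nonempty vertex set V and an adjacency
  relation E (E u v means u -> v); only the restriction of E to V matters.\<close>

definition tournament :: "'a set \<Rightarrow> ('a \<Rightarrow> 'a \<Rightarrow> bool) \<Rightarrow> bool" where
  "tournament V E \<longleftrightarrow> finite V \<and> V \<noteq> {} \<and> (\<forall>u\<in>V. \<not> E u u) \<and>
     (\<forall>u\<in>V. \<forall>v\<in>V. u \<noteq> v \<longrightarrow> (E u v \<longleftrightarrow> \<not> E v u))"

definition homogeneous :: "'a set \<Rightarrow> ('a \<Rightarrow> 'a \<Rightarrow> bool) \<Rightarrow> 'a set \<Rightarrow> bool" where
  "homogeneous V E X \<longleftrightarrow> X \<subseteq> V \<and>
     (\<forall>v\<in>V - X. (\<forall>x\<in>X. E v x) \<or> (\<forall>x\<in>X. E x v))"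

definition prime_tournament :: "'a set \<Rightarrow> ('a \<Rightarrow> 'a \<Rightarrow> bool) \<Rightarrow> bool" where
  "prime_tournament V E \<longleftrightarrow>
     (\<forall>X. homogeneous V E X \<longrightarrow> card X \<le> 1 \<or> X = V)"

definition tourn_iso :: "'a set \<Rightarrow> ('a \<Rightarrow> 'a \<Rightarrow> bool) \<Rightarrow> 'b set \<Rightarrow> ('b \<Rightarrow> 'b \<Rightarrow> bool) \<Rightarrow> bool" where
  "tourn_iso V E W F \<longleftrightarrow>
     (\<exists>f. bij_betw f V W \<and> (\<forall>u\<in>V. \<forall>v\<in>V. E u v \<longleftrightarrow> F (f u) (f v)))"

definition has_subtournament :: "'a set \<Rightarrow> ('a \<Rightarrow> 'a \<Rightarrow> bool) \<Rightarrow> 'b set \<Rightarrow> ('b \<Rightarrow> 'b \<Rightarrow> bool) \<Rightarrow> bool" where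
  "has_subtournament V E W F \<longleftrightarrow> (\<exists>S. S \<subseteq> V \<and> S \<noteq> {} \<and> tourn_iso S E W F)"

definition D4_V :: "nat set" where "D4_V = {0,1,2,3}"

definition D4_E :: "nat \<Rightarrow> nat \<Rightarrow> bool" where
  "D4_E u v \<longleftrightarrow> (u, v) \<in> {(0,1), (1,2), (2,0), (3,0), (3,1), (3,2)}"

text \<open>T_n for n = 2k+1, vertices 0..n-1 (the paper's v_1..v_n shifted by one):
  i -> j iff j - i is congruent to one of 1..k modulo n.\<close>
definition T_V :: "nat \<Rightarrow> nat set" where "T_V n = {0..<n}"

definition T_E :: "nat \<Rightarrow> nat \<Rightarrow> nat \<Rightarrow> bool" where
  "T_E n i j \<longleftrightarrow> (let d = (int j - int i) mod int n in 1 \<le> d \<and> d \<le> int ((n - 1) div 2))"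

end

theory Submission
  imports Defs
begin


lemma tourD:
  assumes "tournament V E"
  shows "finite V" "V \<noteq> {}" "\<And>u. u\<in>V \<Longrightarrow> \<not> E u u"
    "\<And>u v. u\<in>V \<Longrightarrow> v\<in>V \<Longrightarrow> u \<noteq> v \<Longrightarrow> E u v \<longleftrightarrow> \<not> E v u"
  using assms unfolding tournament_def by blast+

lemma tour_anti:
  assumes "tournament V E" "u \<in> V" "v \<in> V" "E u v"
  shows "\<not> E v u"
  using tourD(3,4)[OF assms(1)] assms(2-4) by metis



lemma T_E_iff:
  "T_E n i j \<longleftrightarrow> 1 \<le> (int j - int i) mod int n \<and> (int j - int i) mod int n \<le> int ((n - 1) div 2)"
  unfolding T_E_def Let_def by (rule refl)

lemma T_E_alt:
  assumes "n = 2*k+1" "i < n" "j < n"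
  shows "T_E n i j \<longleftrightarrow> (i < j \<and> j \<le> i + k) \<or> (j < i \<and> j + k + 1 \<le> i)"
proof -
  have kk: "(n - 1) div 2 = k" using assms(1) by simp
  show ?thesis
  proof (cases "i \<le> j")
    case True
    have "(int j - int i) mod int n = int j - int i"
      using True assms(2,3) by (intro mod_pos_pos_trivial) linarith+
    then show ?thesis using True unfolding T_E_iff kk by auto
  next
    case False
    have "(int j - int i) mod int n = (int j - int i + int n) mod int n" by simp
    also have "\<dots> = int j - int i + int n"
      using False assms(2,3) by (intro mod_pos_pos_trivial) linarith+
    finally have m: "(int j - int i) mod int n = int j - int i + int n" .
    have "int n = 2*int k + 1" using assms(1) by simp
    then show ?thesis using False assms(2) unfolding T_E_iff kk m by auto
  qed
qed



lemma T_E_off: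
  assumes "odd n" "T_E n d a" "T_E n d b" "T_E n a b"
  shows "(int a - int d) mod int n < (int b - int d) mod int n"
proof (rule ccontr)
  define k where "k = (n - 1) div 2"
  have nk: "n = 2 * k + 1" using assms(1) unfolding k_def by presburger
  have n: "int n = 2 * int k + 1" using nk by simp
  define oa where "oa = (int a - int d) mod int n"
  define ob where "ob = (int b - int d) mod int n"
  have a: "1 \<le> oa" "oa \<le> int k" using assms(2) unfolding T_E_iff oa_def k_def[symmetric] by blast+
  have b: "1 \<le> ob" "ob \<le> int k" using assms(3) unfolding T_E_iff ob_def k_def[symmetric] by blast+
  assume "\<not> (int a - int d) mod int n < (int b - int d) mod int n"
  hence le: "ob \<le> oa" unfolding oa_def ob_def by simp
  have "(ob - oa) mod int n = ((int b - int d) - (int a - int d)) mod int n"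
    unfolding oa_def ob_def by (rule mod_diff_eq)
  hence eq: "(int b - int a) mod int n = (ob - oa) mod int n" by simp
  have ab: "1 \<le> (int b - int a) mod int n" "(int b - int a) mod int n \<le> int k"
    using assms(4) unfolding T_E_iff k_def[symmetric] by blast+
  show False
  proof (cases "ob = oa")
    case True
    then show ?thesis using eq ab by simp
  next
    case False
    have "(ob - oa) mod int n = (ob - oa + int n) mod int n" by simp
    also have "\<dots> = ob - oa + int n"
      using False le a b n by (intro mod_pos_pos_trivial) linarith+
    finally have "(ob - oa) mod int n = ob - oa + int n" .
    then show ?thesis using eq ab a b n le False by linarith
  qed
qed

lemma T_noD4:
  assumes "odd n" "T_E n d a" "T_E n d b" "T_E n d c" "T_E n a b" "T_E n b c" "T_E n c a"
  shows False
  using T_E_off[OF assms(1,2,3,5)] T_E_off[OF assms(1,3,4,6)] T_E_off[OF assms(1,4,2,7)]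
  by linarith



lemma mk_D4:
  assumes t: "tournament V E" and V: "d\<in>V" "a\<in>V" "b\<in>V" "c\<in>V"
    and e: "E d a" "E d b" "E d c" "E a b" "E b c" "E c a"
  shows "has_subtournament V E D4_V D4_E"
proof -
  note T = tourD[OF t]
  have ne: "d \<noteq> a" "d \<noteq> b" "d \<noteq> c" "a \<noteq> b" "b \<noteq> c" "c \<noteq> a"
    using T(3)[OF V(1)] T(3)[OF V(2)] T(3)[OF V(3)] e by auto
  have nn: "\<not> E a d" "\<not> E b d" "\<not> E c d" "\<not> E b a" "\<not> E c b" "\<not> E a c"
    using tour_anti[OF t] V e by blast+
  have nr: "\<not> E a a" "\<not> E b b" "\<not> E c c" "\<not> E d d" using T(3) V by auto
  define f where "f x = (if x = a then 0 else if x = b then 1 else if x = c then 2 else (3::nat))" for x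
  have fv: "f a = 0" "f b = 1" "f c = 2" "f d = 3" unfolding f_def using ne by auto
  have "inj_on f {a,b,c,d}" unfolding inj_on_def using fv by auto
  moreover have "f ` {a,b,c,d} = D4_V" unfolding D4_V_def using fv by auto
  ultimately have "bij_betw f {a,b,c,d} D4_V" unfolding bij_betw_def by blast
  moreover have "\<forall>u\<in>{a,b,c,d}. \<forall>v\<in>{a,b,c,d}. E u v \<longleftrightarrow> D4_E (f u) (f v)"
    unfolding ball_simps insert_iff empty_iff fv D4_E_def using nn nr e by simp
  ultimately have "tourn_iso {a,b,c,d} E D4_V D4_E" unfolding tourn_iso_def by blast
  moreover have "{a,b,c,d} \<subseteq> V" using V by blast
  ultimately show ?thesis unfolding has_subtournament_def by blast
qed




locale PTD =
  fixes V :: "'a set" and E :: "'a \<Rightarrow> 'a \<Rightarrow> bool"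
  assumes tour: "tournament V E" and prime: "prime_tournament V E" and card3: "card V \<ge> 3"
    and d4: "\<And>d a b c. d\<in>V \<Longrightarrow> a\<in>V \<Longrightarrow> b\<in>V \<Longrightarrow> c\<in>V \<Longrightarrow> E d a \<Longrightarrow> E d b \<Longrightarrow> E d c
             \<Longrightarrow> E a b \<Longrightarrow> E b c \<Longrightarrow> E c a \<Longrightarrow> False"
begin

lemma fin: "finite V" using tourD(1)[OF tour] .
lemma irr: "u \<in> V \<Longrightarrow> \<not> E u u" using tourD(3)[OF tour] by blast
lemma anti: "u \<in> V \<Longrightarrow> v \<in> V \<Longrightarrow> E u v \<Longrightarrow> \<not> E v u" using tour_anti[OF tour] by blast
lemma tot: "u \<in> V \<Longrightarrow> v \<in> V \<Longrightarrow> u \<noteq> v \<Longrightarrow> \<not> E u v \<Longrightarrow> E v u"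
  using tourD(4)[OF tour] by blast

lemma hom_contra:
  assumes "homogeneous V E X" "x \<in> X" "y \<in> X" "x \<noteq> y" "z \<in> V" "z \<notin> X"
  shows False
proof -
  have "X \<subseteq> V" using assms(1) unfolding homogeneous_def by blast
  hence "finite X" using fin finite_subset by blast
  hence "card {x,y} \<le> card X" using assms(2,3) by (intro card_mono) auto
  moreover have "card {x,y} = 2" using assms(4) by simp
  moreover have "X \<noteq> V" using assms(5,6) by blast
  ultimately show False using prime assms(1) unfolding prime_tournament_def by force
qed

lemma homI:
  assumes "X \<subseteq> V" "\<And>z. z \<in> V \<Longrightarrow> z \<notin> X \<Longrightarrow> (\<forall>x\<in>X. E z x) \<or> (\<forall>x\<in>X. E x z)"
  shows "homogeneous V E X"
  using assms unfolding homogeneous_def by blast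

lemma closure_step:
  assumes V: "a\<in>V" "b\<in>V" "c\<in>V" "w\<in>V" "y\<in>V"
    and cyc: "E a b" "E b c" "E c a" and B: "E a w" "E b w" "E c w" and wy: "E w y"
    and ya: "E y a"
  shows "E y b"
proof (rule ccontr)
  assume nyb: "\<not> E y b"
  have "y \<noteq> b" using anti[OF V(2) V(4) B(2)] wy by blast
  hence hby: "E b y" using tot[OF V(5) V(2)] nyb by blast
  have cy: "E c y"
  proof (rule ccontr)
    assume ncy: "\<not> E c y"
    have "y \<noteq> c" using anti[OF V(3) V(4) B(3)] wy by blast
    hence "E y c" using tot[OF V(3) V(5)] ncy by blast
    then show False using d4[OF V(2) V(3) V(4) V(5) cyc(2) B(2) hby B(3) wy] by blast
  qed
  show False using d4[OF V(3) V(1) V(4) V(5) cyc(3) B(3) cy B(1) wy ya] .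
qed

lemma closure:
  assumes V: "a\<in>V" "b\<in>V" "c\<in>V" "w\<in>V" "y\<in>V"
    and cyc: "E a b" "E b c" "E c a" and B: "E a w" "E b w" "E c w" and wy: "E w y"
  shows "E a y \<and> E b y \<and> E c y"
proof -
  have s1: "E y a \<Longrightarrow> E y b" using closure_step[OF V cyc B wy] by blast
  have s2: "E y b \<Longrightarrow> E y c" using closure_step[OF V(2,3,1,4,5) cyc(2,3,1) B(2,3,1) wy] by blast
  have s3: "E y c \<Longrightarrow> E y a" using closure_step[OF V(3,1,2,4,5) cyc(3,1,2) B(3,1,2) wy] by blast
  have all: "\<not> (E y a \<and> E y b \<and> E y c)" using d4[OF V(5) V(1) V(2) V(3) _ _ _ cyc] by blast
  have ya: "y \<noteq> a" using anti[OF V(1) V(4) B(1)] wy by blast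
  have yb: "y \<noteq> b" using anti[OF V(2) V(4) B(2)] wy by blast
  have yc: "y \<noteq> c" using anti[OF V(3) V(4) B(3)] wy by blast
  have "\<not> E y a" "\<not> E y b" "\<not> E y c" using s1 s2 s3 all by blast+
  thus ?thesis using tot V ya yb yc by blast
qed

lemma in_trans:
  assumes V: "v\<in>V" "a\<in>V" "b\<in>V" "c\<in>V" and e: "E a v" "E b v" "E c v" "E a b" "E b c" "E c a"
  shows False
proof -
  define B where "B = {w\<in>V. E a w \<and> E b w \<and> E c w}"
  have cl: "y \<in> B" if "w \<in> B" "y \<in> V" "E w y" for w y
    using closure[OF V(2,3,4) _ that(2) e(4,5,6) _ _ _ that(3)] that(1,2) unfolding B_def by blast
  have "homogeneous V E (V - B)"
  proof (rule homI)
    show "V - B \<subseteq> V" by blast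
    fix z assume z: "z\<in>V" "z \<notin> V - B"
    hence zB: "z\<in>B" by blast
    have "\<forall>x\<in>V - B. E x z"
    proof
      fix x assume "x \<in> V - B"
      then have x: "x\<in>V" "x\<notin>B" by auto
      have "x \<noteq> z" using zB x by blast
      moreover have "\<not> E z x" using cl[OF zB x(1)] x(2) by blast
      ultimately show "E x z" using tot[OF z(1) x(1)] by blast
    qed
    thus "(\<forall>x\<in>V - B. E z x) \<or> (\<forall>x\<in>V - B. E x z)" by blast
  qed
  moreover have "a \<in> V - B" using irr[OF V(2)] V(2) unfolding B_def by blast
  moreover have "b \<in> V - B" using irr[OF V(3)] V(3) unfolding B_def by blast
  moreover have "a \<noteq> b" using irr[OF V(2)] e(4) by blast
  moreover have "v \<notin> V - B" using V e unfolding B_def by blast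
  ultimately show False using hom_contra V(1) by blast
qed

end



lemma upclosed:
  fixes U :: "nat set"
  assumes "U \<subseteq> {1..k}" "U \<noteq> {}" "\<And>j j'. j\<in>U \<Longrightarrow> j \<le> j' \<Longrightarrow> j' \<le> k \<Longrightarrow> j'\<in>U"
  shows "U = {Min U..k}"
proof -
  have fin: "finite U" using assms(1) finite_subset by blast
  have m: "Min U \<in> U" using Min_in[OF fin assms(2)] .
  show ?thesis
  proof
    show "U \<subseteq> {Min U..k}" using Min_le[OF fin] assms(1) by auto
    show "{Min U..k} \<subseteq> U" using assms(3)[OF m] by auto
  qed
qed

context PTD
begin

lemma hom_contra2:
  assumes "homogeneous V E X" "2 \<le> card X" "z \<in> V" "z \<notin> X"
  shows False
proof -
  have "X \<noteq> V" using assms(3,4) by blast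
  thus False using prime assms(1,2) unfolding prime_tournament_def by force
qed

end

locale PTD0 = PTD +
  fixes v0 assumes v0: "v0 \<in> V"
begin

definition "Out = {x\<in>V. E v0 x}"
definition "In = {x\<in>V. E x v0}"
definition "P x = {y\<in>In. E x y}"
definition "H y = {x\<in>Out. E x y}"
definition "p x = card (P x)"
definition "h y = card (H y)"
definition "kk = card Out"

lemma Out_sub: "Out \<subseteq> V" and In_sub: "In \<subseteq> V" unfolding Out_def In_def by auto
lemma finO: "finite Out" and finI: "finite In" using Out_sub In_sub fin finite_subset by auto
lemma v0O: "v0 \<notin> Out" and v0I: "v0 \<notin> In" using irr[OF v0] unfolding Out_def In_def by auto
lemma OI: "x \<in> Out \<Longrightarrow> x \<notin> In" using anti[OF v0] unfolding Out_def In_def by blast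
lemma splitV: assumes "x \<in> V" shows "x = v0 \<or> x \<in> Out \<or> x \<in> In"
proof (cases "x = v0")
  case False
  show ?thesis
  proof (cases "E v0 x")
    case True thus ?thesis using assms unfolding Out_def by blast
  next
    case f: False
    have "E x v0" using tot[OF v0 assms] False f by metis
    thus ?thesis using assms unfolding In_def by blast
  qed
qed simp
lemma OutD: "x \<in> Out \<Longrightarrow> x \<in> V \<and> E v0 x" unfolding Out_def by blast
lemma InD: "x \<in> In \<Longrightarrow> x \<in> V \<and> E x v0" unfolding In_def by blast

lemma Vsplit: "V = insert v0 (Out \<union> In)"
  using splitV v0 Out_sub In_sub by blast
lemma cardV: "card V = 1 + card Out + card In"
proof -
  have "card (insert v0 (Out \<union> In)) = Suc (card (Out \<union> In))"
    using finO finI v0O v0I by (intro card_insert_disjoint) auto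
  hence "card V = Suc (card (Out \<union> In))" using Vsplit by metis
  also have "card (Out \<union> In) = card Out + card In"
    using finO finI OI by (intro card_Un_disjoint) auto
  finally show ?thesis by simp
qed

lemma two_elems:
  assumes "finite A" "2 \<le> card A" shows "\<exists>x\<in>A. \<exists>y\<in>A. x \<noteq> y"
proof (rule ccontr)
  assume "\<not> ?thesis"
  hence "\<forall>x\<in>A. \<forall>y\<in>A. x = y" by blast
  hence "card A \<le> Suc 0" using card_le_Suc0_iff_eq[OF assms(1)] by blast
  thus False using assms(2) by simp
qed

lemma Out_ne: "Out \<noteq> {}"
proof
  assume O: "Out = {}"
  have "homogeneous V E (V - {v0})"
  proof (rule homI)
    fix z assume "z \<in> V" "z \<notin> V - {v0}"
    hence "z = v0" by blast
    moreover have "\<forall>x\<in>V - {v0}. E x v0" using splitV O InD by blast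
    ultimately show "(\<forall>x\<in>V - {v0}. E z x) \<or> (\<forall>x\<in>V - {v0}. E x z)" by blast
  qed auto
  moreover have "2 \<le> card (V - {v0})" using card3 v0 fin by simp
  ultimately show False using hom_contra2 v0 by blast
qed

lemma In_ne: "In \<noteq> {}"
proof
  assume I: "In = {}"
  have "homogeneous V E (V - {v0})"
  proof (rule homI)
    fix z assume "z \<in> V" "z \<notin> V - {v0}"
    hence "z = v0" by blast
    moreover have "\<forall>x\<in>V - {v0}. E v0 x" using splitV I OutD by blast
    ultimately show "(\<forall>x\<in>V - {v0}. E z x) \<or> (\<forall>x\<in>V - {v0}. E x z)" by blast
  qed auto
  moreover have "2 \<le> card (V - {v0})" using card3 v0 fin by simp
  ultimately show False using hom_contra2 v0 by blast
qed

lemma Pmono: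
  assumes x: "x \<in> Out" and x': "x' \<in> Out" and e: "E x x'"
  shows "P x \<subseteq> P x'"
proof
  fix y assume "y \<in> P x"
  hence y: "y \<in> In" "E x y" unfolding P_def by auto
  have "E x' y"
  proof (rule ccontr)
    assume n: "\<not> E x' y"
    have "y \<noteq> x'" using OI x' y(1) by blast
    hence "E y x'" using tot OutD[OF x'] InD[OF y(1)] n by blast
    thus False using in_trans[of x' x y v0] OutD[OF x] OutD[OF x'] InD[OF y(1)] v0 e y(2) by blast
  qed
  thus "y \<in> P x'" using y unfolding P_def by blast
qed

lemma Hmono:
  assumes y: "y \<in> In" and y': "y' \<in> In" and e: "E y y'"
  shows "H y' \<subseteq> H y"
proof
  fix x assume "x \<in> H y'"
  hence x: "x \<in> Out" "E x y'" unfolding H_def by auto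
  have "E x y"
  proof (rule ccontr)
    assume n: "\<not> E x y"
    have "y \<noteq> x" using OI x y by blast
    hence "E y x" using tot OutD[OF x(1)] InD[OF y] n by blast
    thus False using d4[of y x y' v0] OutD[OF x(1)] InD[OF y] InD[OF y'] v0 e x(2) by blast
  qed
  thus "x \<in> H y" using x unfolding H_def by blast
qed

lemma finP: "finite (P x)" unfolding P_def using finI by auto
lemma finH: "finite (H x)" unfolding H_def using finO by auto

lemma p_mono: "x \<in> Out \<Longrightarrow> x' \<in> Out \<Longrightarrow> E x x' \<Longrightarrow> p x \<le> p x'"
  unfolding p_def using Pmono finP by (intro card_mono) auto
lemma h_mono: "y \<in> In \<Longrightarrow> y' \<in> In \<Longrightarrow> E y y' \<Longrightarrow> h y' \<le> h y"
  unfolding h_def using Hmono finH by (intro card_mono) auto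

lemma P_eq:
  assumes "x \<in> Out" "x' \<in> Out" "p x = p x'" shows "P x = P x'"
proof (cases "x = x'")
  case False
  hence "E x x' \<or> E x' x" using tot OutD assms(1,2) by blast
  thus ?thesis
  proof
    assume "E x x'" thus ?thesis using Pmono assms finP card_subset_eq unfolding p_def by metis
  next
    assume "E x' x" thus ?thesis using Pmono assms finP card_subset_eq unfolding p_def by metis
  qed
qed simp

lemma H_eq:
  assumes "y \<in> In" "y' \<in> In" "h y = h y'" shows "H y = H y'"
proof (cases "y = y'")
  case False
  hence "E y y' \<or> E y' y" using tot InD assms(1,2) by blast
  thus ?thesis
  proof
    assume "E y y'" thus ?thesis using Hmono assms finH card_subset_eq unfolding h_def by metis
  next
    assume "E y' y" thus ?thesis using Hmono assms finH card_subset_eq unfolding h_def by metis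
  qed
qed simp

end



context PTD0
begin

lemma p_inj: "inj_on p Out"
proof (rule inj_onI, rule ccontr)
  fix x x' assume x: "x \<in> Out" and x': "x' \<in> Out" and eq: "p x = p x'" and ne: "x \<noteq> x'"
  define X where "X = {w\<in>Out. p w = p x}"
  have "homogeneous V E X"
  proof (rule homI)
    show "X \<subseteq> V" using Out_sub unfolding X_def by blast
    fix z assume z: "z \<in> V" "z \<notin> X"
    consider "z = v0" | "z \<in> Out" | "z \<in> In" using splitV[OF z(1)] by blast
    then show "(\<forall>w\<in>X. E z w) \<or> (\<forall>w\<in>X. E w z)"
    proof cases
      case 1 thus ?thesis using OutD unfolding X_def by blast
    next
      case 2
      hence pz: "p z \<noteq> p x" using z(2) unfolding X_def by blast
      show ?thesis
      proof (cases "p z < p x")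
        case True
        have "E z w" if w: "w \<in> X" for w
        proof -
          have wO: "w \<in> Out" "p w = p x" using w unfolding X_def by auto
          have "w \<noteq> z" using wO pz by auto
          moreover have "\<not> E w z" using p_mono[OF wO(1) 2] wO True by auto
          ultimately show ?thesis using tot OutD wO(1) 2 by blast
        qed
        thus ?thesis by blast
      next
        case False
        have "E w z" if w: "w \<in> X" for w
        proof -
          have wO: "w \<in> Out" "p w = p x" using w unfolding X_def by auto
          have "w \<noteq> z" using wO pz by auto
          moreover have "\<not> E z w" using p_mono[OF 2 wO(1)] wO False pz by auto
          ultimately show ?thesis using tot OutD wO(1) 2 by blast
        qed
        thus ?thesis by blast
      qed
    next
      case 3
      have PX: "P w = P x" if "w \<in> X" for w using P_eq that x unfolding X_def by blast
      have zw: "w \<noteq> z" if "w \<in> X" for w using that OI 3 unfolding X_def by blast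
      show ?thesis
      proof (cases "E x z")
        case True
        hence "z \<in> P x" using 3 unfolding P_def by blast
        hence "E w z" if "w \<in> X" for w using PX[OF that] unfolding P_def by blast
        thus ?thesis by blast
      next
        case False
        hence "z \<notin> P x" unfolding P_def by blast
        hence "\<not> E w z" if "w \<in> X" for w using PX[OF that] 3 unfolding P_def by blast
        hence "E z w" if "w \<in> X" for w using tot[OF z(1)] zw[OF that] that Out_sub
          unfolding X_def by blast
        thus ?thesis by blast
      qed
    qed
  qed
  moreover have "x \<in> X" "x' \<in> X" using x x' eq unfolding X_def by auto
  moreover have "v0 \<notin> X" using v0O unfolding X_def by blast
  ultimately show False using hom_contra[of X x x' v0] ne v0 by blast
qed

lemma h_inj: "inj_on h In"
proof (rule inj_onI, rule ccontr)
  fix y y' assume y: "y \<in> In" and y': "y' \<in> In" and eq: "h y = h y'" and ne: "y \<noteq> y'"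
  define Y where "Y = {w\<in>In. h w = h y}"
  have "homogeneous V E Y"
  proof (rule homI)
    show "Y \<subseteq> V" using In_sub unfolding Y_def by blast
    fix z assume z: "z \<in> V" "z \<notin> Y"
    consider "z = v0" | "z \<in> In" | "z \<in> Out" using splitV[OF z(1)] by blast
    then show "(\<forall>w\<in>Y. E z w) \<or> (\<forall>w\<in>Y. E w z)"
    proof cases
      case 1 thus ?thesis using InD unfolding Y_def by blast
    next
      case 2
      hence hz: "h z \<noteq> h y" using z(2) unfolding Y_def by blast
      show ?thesis
      proof (cases "h z < h y")
        case True
        have "E w z" if w: "w \<in> Y" for w
        proof -
          have wI: "w \<in> In" "h w = h y" using w unfolding Y_def by auto
          have "w \<noteq> z" using wI hz by auto
          moreover have "\<not> E z w" using h_mono[OF 2 wI(1)] wI True by auto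
          ultimately show ?thesis using tot InD wI(1) 2 by blast
        qed
        thus ?thesis by blast
      next
        case False
        have "E z w" if w: "w \<in> Y" for w
        proof -
          have wI: "w \<in> In" "h w = h y" using w unfolding Y_def by auto
          have "w \<noteq> z" using wI hz by auto
          moreover have "\<not> E w z" using h_mono[OF wI(1) 2] wI False hz by auto
          ultimately show ?thesis using tot InD wI(1) 2 by blast
        qed
        thus ?thesis by blast
      qed
    next
      case 3
      have HY: "H w = H y" if "w \<in> Y" for w using H_eq that y unfolding Y_def by blast
      have zw: "w \<noteq> z" if "w \<in> Y" for w using that OI 3 unfolding Y_def by blast
      show ?thesis
      proof (cases "E z y")
        case True
        hence "z \<in> H y" using 3 unfolding H_def by blast
        hence "E z w" if "w \<in> Y" for w using HY[OF that] unfolding H_def by blast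
        thus ?thesis by blast
      next
        case False
        hence "z \<notin> H y" unfolding H_def by blast
        hence "\<not> E z w" if "w \<in> Y" for w using HY[OF that] 3 unfolding H_def by blast
        hence "E w z" if "w \<in> Y" for w using tot[OF z(1)] zw[OF that] that In_sub
          unfolding Y_def by blast
        thus ?thesis by blast
      qed
    qed
  qed
  moreover have "y \<in> Y" "y' \<in> Y" using y y' eq unfolding Y_def by auto
  moreover have "v0 \<notin> Y" using v0I unfolding Y_def by blast
  ultimately show False using hom_contra[of Y y y' v0] ne v0 by blast
qed

end



context PTD0
begin

lemma p_pos: assumes x: "x \<in> Out" shows "1 \<le> p x"
proof (rule ccontr)
  assume "\<not> 1 \<le> p x" hence px: "p x = 0" by simp
  define X where "X = insert v0 {w\<in>Out. p w = 0}"
  have P0: "P w = {}" if "w \<in> Out" "p w = 0" for w using that finP unfolding p_def by auto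
  have "homogeneous V E X"
  proof (rule homI)
    show "X \<subseteq> V" using Out_sub v0 unfolding X_def by blast
    fix z assume z: "z \<in> V" "z \<notin> X"
    hence zv: "z \<noteq> v0" unfolding X_def by blast
    consider "z \<in> Out" | "z \<in> In" using splitV[OF z(1)] zv by blast
    then show "(\<forall>w\<in>X. E z w) \<or> (\<forall>w\<in>X. E w z)"
    proof cases
      case 1
      hence pz: "p z \<noteq> 0" using z(2) unfolding X_def by auto
      have "E w z" if w: "w \<in> X" for w
      proof (cases "w = v0")
        case True thus ?thesis using 1 OutD by blast
      next
        case False
        hence wO: "w \<in> Out" "p w = 0" using w unfolding X_def by auto
        have "w \<noteq> z" using wO pz by auto
        moreover have "\<not> E z w" using p_mono[OF 1 wO(1)] wO pz by auto
        ultimately show ?thesis using tot OutD wO(1) 1 by blast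
      qed
      thus ?thesis by blast
    next
      case 2
      have "E z w" if w: "w \<in> X" for w
      proof (cases "w = v0")
        case True thus ?thesis using 2 InD by blast
      next
        case False
        hence wO: "w \<in> Out" "p w = 0" using w unfolding X_def by auto
        have "w \<noteq> z" using wO 2 OI by auto
        moreover have "\<not> E w z" using P0[OF wO] 2 unfolding P_def by blast
        ultimately show ?thesis using tot OutD InD wO(1) 2 by blast
      qed
      thus ?thesis by blast
    qed
  qed
  moreover have "x \<in> X" "v0 \<in> X" using x px unfolding X_def by auto
  moreover have "x \<noteq> v0" using x v0O by blast
  moreover obtain z where "z \<in> In" using In_ne by blast
  moreover have "z \<notin> X" using \<open>z \<in> In\<close> OI v0I unfolding X_def by blast
  ultimately show False using hom_contra[of X x v0 z] In_sub by blast
qed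

lemma h_pos: assumes y: "y \<in> In" shows "1 \<le> h y"
proof (rule ccontr)
  assume "\<not> 1 \<le> h y" hence hy: "h y = 0" by simp
  define Y where "Y = insert v0 {w\<in>In. h w = 0}"
  have H0: "H w = {}" if "w \<in> In" "h w = 0" for w using that finH unfolding h_def by auto
  have "homogeneous V E Y"
  proof (rule homI)
    show "Y \<subseteq> V" using In_sub v0 unfolding Y_def by blast
    fix z assume z: "z \<in> V" "z \<notin> Y"
    hence zv: "z \<noteq> v0" unfolding Y_def by blast
    consider "z \<in> In" | "z \<in> Out" using splitV[OF z(1)] zv by blast
    then show "(\<forall>w\<in>Y. E z w) \<or> (\<forall>w\<in>Y. E w z)"
    proof cases
      case 1
      hence hz: "h z \<noteq> 0" using z(2) unfolding Y_def by auto
      have "E z w" if w: "w \<in> Y" for w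
      proof (cases "w = v0")
        case True thus ?thesis using 1 InD by blast
      next
        case False
        hence wI: "w \<in> In" "h w = 0" using w unfolding Y_def by auto
        have "w \<noteq> z" using wI hz by auto
        moreover have "\<not> E w z" using h_mono[OF wI(1) 1] wI hz by auto
        ultimately show ?thesis using tot InD wI(1) 1 by blast
      qed
      thus ?thesis by blast
    next
      case 2
      have "E w z" if w: "w \<in> Y" for w
      proof (cases "w = v0")
        case True thus ?thesis using 2 OutD by blast
      next
        case False
        hence wI: "w \<in> In" "h w = 0" using w unfolding Y_def by auto
        have "w \<noteq> z" using wI 2 OI by auto
        moreover have "\<not> E z w" using H0[OF wI] 2 unfolding H_def by blast
        ultimately show ?thesis using tot OutD InD wI(1) 2 by blast
      qed
      thus ?thesis by blast
    qed
  qed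
  moreover have "y \<in> Y" "v0 \<in> Y" using y hy unfolding Y_def by auto
  moreover have "y \<noteq> v0" using y v0I by blast
  moreover obtain z where "z \<in> Out" using Out_ne by blast
  moreover have "z \<notin> Y" using \<open>z \<in> Out\<close> OI v0O unfolding Y_def by blast
  ultimately show False using hom_contra[of Y y v0 z] Out_sub by blast
qed

lemma p_le: "p x \<le> card In" unfolding p_def P_def using finI by (intro card_mono) auto
lemma h_le: "h y \<le> kk" unfolding h_def H_def kk_def using finO by (intro card_mono) auto

lemma pimg_sub: "p ` Out \<subseteq> {1..card In}" using p_pos p_le by auto
lemma himg_sub: "h ` In \<subseteq> {1..kk}" using h_pos h_le by auto

lemma card_eq: "card In = kk"
proof -
  have "kk = card (p ` Out)" unfolding kk_def using card_image[OF p_inj] by simp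
  also have "\<dots> \<le> card {1..card In}" by (intro card_mono) (use pimg_sub in auto)
  finally have a: "kk \<le> card In" by simp
  have "card In = card (h ` In)" using card_image[OF h_inj] by simp
  also have "\<dots> \<le> card {1..kk}" by (intro card_mono) (use himg_sub in auto)
  finally have b: "card In \<le> kk" by simp
  show ?thesis using a b by simp
qed

lemma pimg: "p ` Out = {1..kk}"
  using pimg_sub card_eq card_image[OF p_inj]
  by (intro card_subset_eq) (auto simp: kk_def)

lemma himg: "h ` In = {1..kk}"
  using himg_sub card_eq card_image[OF h_inj]
  by (intro card_subset_eq) auto

lemma Out_ord: assumes "x \<in> Out" "x' \<in> Out" shows "E x x' \<longleftrightarrow> p x < p x'"
proof
  assume e: "E x x'"
  have "x \<noteq> x'" using e irr OutD assms(1) by blast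
  hence "p x \<noteq> p x'" using p_inj assms unfolding inj_on_def by blast
  thus "p x < p x'" using p_mono[OF assms e] by simp
next
  assume lt: "p x < p x'"
  hence "x \<noteq> x'" by auto
  moreover have "\<not> E x' x" using p_mono[OF assms(2,1)] lt by auto
  ultimately show "E x x'" using tot OutD assms by blast
qed

lemma In_ord: assumes "y \<in> In" "y' \<in> In" shows "E y y' \<longleftrightarrow> h y' < h y"
proof
  assume e: "E y y'"
  have "y \<noteq> y'" using e irr InD assms(1) by blast
  hence "h y \<noteq> h y'" using h_inj assms unfolding inj_on_def by blast
  thus "h y' < h y" using h_mono[OF assms e] by simp
next
  assume lt: "h y' < h y"
  hence "y \<noteq> y'" by auto
  moreover have "\<not> E y' y" using h_mono[OF assms(2,1)] lt by auto
  ultimately show "E y y'" using tot InD assms by blast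
qed

end



context PTD0
begin

lemma cross: assumes x: "x \<in> Out" and y: "y \<in> In" shows "E x y \<longleftrightarrow> kk + 1 \<le> p x + h y"
proof -
  define S where "S = H y"
  define U where "U = p ` S"
  have SO: "S \<subseteq> Out" unfolding S_def H_def by blast
  have Usub: "U \<subseteq> {1..kk}" using SO pimg unfolding U_def by blast
  have "S \<noteq> {}" using h_pos[OF y] unfolding h_def S_def by auto
  hence Une: "U \<noteq> {}" unfolding U_def by blast
  have up: "j' \<in> U" if j: "j \<in> U" "j \<le> j'" "j' \<le> kk" for j j'
  proof -
    obtain s where s: "s \<in> S" "j = p s" using j(1) unfolding U_def by blast
    have "j' \<in> p ` Out" using pimg j Usub s by force
    then obtain x' where x': "x' \<in> Out" "j' = p x'" by blast
    have "x' \<in> S"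
    proof (cases "p s = p x'")
      case True
      hence "s = x'" using p_inj SO s(1) x'(1) unfolding inj_on_def by blast
      thus ?thesis using s by blast
    next
      case False
      hence "p s < p x'" using j s x' by simp
      hence "E s x'" using Out_ord SO s(1) x'(1) by blast
      hence "P s \<subseteq> P x'" using Pmono SO s(1) x'(1) by blast
      moreover have "y \<in> P s" using s(1) y unfolding S_def H_def P_def by blast
      ultimately have "y \<in> P x'" by blast
      thus ?thesis using x'(1) unfolding S_def H_def P_def by blast
    qed
    thus ?thesis using x' unfolding U_def by blast
  qed
  have Ueq: "U = {Min U..kk}" using upclosed[OF Usub Une] up by blast
  have cU: "card U = h y" unfolding U_def h_def S_def[symmetric]
    using card_image inj_on_subset[OF p_inj SO] by blast
  have mU: "Min U \<in> U" using Une Usub finite_subset[OF Usub] Min_in by blast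
  hence mb: "1 \<le> Min U" "Min U \<le> kk" using Usub by auto
  have cU2: "card U = kk + 1 - Min U" by (subst Ueq) simp
  have "E x y \<longleftrightarrow> x \<in> S" using x unfolding S_def H_def by blast
  also have "\<dots> \<longleftrightarrow> p x \<in> U"
  proof
    assume "p x \<in> U"
    then obtain s where "s \<in> S" "p x = p s" unfolding U_def by blast
    thus "x \<in> S" using p_inj SO x unfolding inj_on_def by blast
  qed (auto simp: U_def)
  also have "\<dots> \<longleftrightarrow> Min U \<le> p x"
  proof -
    have mem: "j \<in> U \<longleftrightarrow> Min U \<le> j \<and> j \<le> kk" for j by (metis atLeastAtMost_iff Ueq)
    have "p x \<le> kk" using pimg x by auto
    thus ?thesis using mem by blast
  qed
  also have "\<dots> \<longleftrightarrow> kk + 1 \<le> p x + h y" using cU cU2 mb by linarith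
  finally show ?thesis .
qed

definition "f w = (if w = v0 then 0 else if w \<in> Out then p w else 2*kk+1 - h w)"

lemma kk_pos: "1 \<le> kk" using Out_ne finO unfolding kk_def by (simp add: Suc_le_eq card_gt_0_iff)

lemma f_v0: "f v0 = 0" unfolding f_def by simp
lemma f_Out: "x \<in> Out \<Longrightarrow> f x = p x \<and> 1 \<le> p x \<and> p x \<le> kk"
  unfolding f_def using v0O p_pos pimg by force
lemma f_In: "y \<in> In \<Longrightarrow> f y = 2*kk+1 - h y \<and> 1 \<le> h y \<and> h y \<le> kk"
  unfolding f_def using v0I OI h_pos h_le by force

lemma f_inj: "inj_on f V"
proof (rule inj_onI)
  fix u v assume u: "u \<in> V" and v: "v \<in> V" and e: "f u = f v"
  consider "u = v0" | "u \<in> Out" | "u \<in> In" using splitV[OF u] by blast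
  then show "u = v"
  proof cases
    case 1
    consider "v = v0" | "v \<in> Out" | "v \<in> In" using splitV[OF v] by blast
    thus ?thesis
    proof cases
      case 2 thus ?thesis using e f_v0 f_Out[OF 2] 1 by simp
    next
      case 3 thus ?thesis using e f_v0 f_In[OF 3] 1 by simp
    qed (use 1 in simp)
  next
    case 2
    consider "v = v0" | "v \<in> Out" | "v \<in> In" using splitV[OF v] by blast
    thus ?thesis
    proof cases
      case 1 thus ?thesis using e f_v0 f_Out[OF 2] by simp
    next
      case 3
      have "f v \<ge> kk + 1" "f u \<le> kk" using f_In[OF 3] f_Out[OF 2] by auto
      thus ?thesis using e by simp
    next
      case b: 2 thus ?thesis using e f_Out[OF 2] f_Out[OF b] p_inj 2 unfolding inj_on_def by metis
    qed
  next
    case 3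
    consider "v = v0" | "v \<in> Out" | "v \<in> In" using splitV[OF v] by blast
    thus ?thesis
    proof cases
      case 1 thus ?thesis using e f_v0 f_In[OF 3] by simp
    next
      case 2
      have "f u \<ge> kk + 1" "f v \<le> kk" using f_In[OF 3] f_Out[OF 2] by auto
      thus ?thesis using e by simp
    next
      case b: 3
      have "h u \<le> kk" "h v \<le> kk" "f u = 2*kk+1 - h u" "f v = 2*kk+1 - h v"
        using f_In[OF 3] f_In[OF b] by auto
      hence "h u = h v" using e by linarith
      thus ?thesis using h_inj 3 b unfolding inj_on_def by metis
    qed
  qed
qed

lemma f_range: "w \<in> V \<Longrightarrow> f w < 2*kk+1"
  using splitV f_v0 f_Out f_In by force

lemma f_bij: "bij_betw f V {0..<2*kk+1}"
proof -
  have sub: "f ` V \<subseteq> {0..<2*kk+1}" using f_range by auto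
  have "card (f ` V) = card V" using card_image[OF f_inj] .
  also have "\<dots> = 2*kk+1" using cardV card_eq unfolding kk_def by simp
  finally have "f ` V = {0..<2*kk+1}" using sub by (intro card_subset_eq) auto
  thus ?thesis using f_inj unfolding bij_betw_def by blast
qed

lemma f_edge: assumes u: "u \<in> V" and v: "v \<in> V"
  shows "E u v \<longleftrightarrow> T_E (2*kk+1) (f u) (f v)"
proof -
  have T: "T_E (2*kk+1) (f u) (f v) \<longleftrightarrow> (f u < f v \<and> f v \<le> f u + kk) \<or> (f v < f u \<and> f v + kk + 1 \<le> f u)"
    using T_E_alt[OF refl f_range[OF u] f_range[OF v]] .
  consider "u = v0" | "u \<in> Out" | "u \<in> In" using splitV[OF u] by blast
  then show ?thesis
  proof cases
    case 1
    consider "v = v0" | "v \<in> Out" | "v \<in> In" using splitV[OF v] by blast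
    thus ?thesis
    proof cases
      case a: 1 thus ?thesis unfolding T using 1 irr[OF v0] f_v0 by simp
    next
      case a: 2 thus ?thesis unfolding T using 1 f_v0 f_Out[OF a] OutD[OF a] by simp
    next
      case a: 3 thus ?thesis unfolding T using 1 f_v0 f_In[OF a] InD[OF a] anti[OF v0] by auto
    qed
  next
    case 2
    have fu: "f u = p u" "1 \<le> p u" "p u \<le> kk" using f_Out[OF 2] by auto
    consider "v = v0" | "v \<in> Out" | "v \<in> In" using splitV[OF v] by blast
    thus ?thesis
    proof cases
      case a: 1 thus ?thesis unfolding T using fu f_v0 OutD[OF 2] anti[OF v0] by auto
    next
      case a: 2
      have fv: "f v = p v" "1 \<le> p v" "p v \<le> kk" using f_Out[OF a] by auto
      show ?thesis unfolding T Out_ord[OF 2 a] using fu fv by auto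
    next
      case a: 3
      have fv: "f v = 2*kk+1 - h v" "1 \<le> h v" "h v \<le> kk" using f_In[OF a] by auto
      show ?thesis unfolding T cross[OF 2 a] using fu fv by auto
    qed
  next
    case 3
    have fu: "f u = 2*kk+1 - h u" "1 \<le> h u" "h u \<le> kk" using f_In[OF 3] by auto
    consider "v = v0" | "v \<in> Out" | "v \<in> In" using splitV[OF v] by blast
    thus ?thesis
    proof cases
      case a: 1 thus ?thesis unfolding T using fu f_v0 InD[OF 3] by auto
    next
      case a: 2
      have fv: "f v = p v" "1 \<le> p v" "p v \<le> kk" using f_Out[OF a] by auto
      have "u \<noteq> v" using 3 a OI by blast
      hence "E u v \<longleftrightarrow> \<not> E v u" using tot anti u v by blast
      thus ?thesis unfolding T cross[OF a 3] using fu fv by auto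
    next
      case a: 3
      have fv: "f v = 2*kk+1 - h v" "1 \<le> h v" "h v \<le> kk" using f_In[OF a] by auto
      show ?thesis unfolding T In_ord[OF 3 a] using fu fv by auto
    qed
  qed
qed

lemma result: "\<exists>n::nat. odd n \<and> n \<ge> 3 \<and> tourn_iso V E (T_V n) (T_E n)"
proof (intro exI conjI)
  show "odd (2*kk+1)" by simp
  show "2*kk+1 \<ge> 3" using kk_pos by simp
  show "tourn_iso V E (T_V (2*kk+1)) (T_E (2*kk+1))"
    unfolding tourn_iso_def T_V_def using f_bij f_edge by blast
qed

end

theorem theorem3p8:
  fixes V :: "'a set" and E :: "'a \<Rightarrow> 'a \<Rightarrow> bool"
  assumes "tournament V E" and "prime_tournament V E" and "card V \<ge> 3"
  shows "\<not> has_subtournament V E D4_V D4_E \<longleftrightarrow>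
         (\<exists>n::nat. odd n \<and> n \<ge> 3 \<and> tourn_iso V E (T_V n) (T_E n))"
proof
  assume nh: "\<not> has_subtournament V E D4_V D4_E"
  have d4: "False" if "d\<in>V" "a\<in>V" "b\<in>V" "c\<in>V" "E d a" "E d b" "E d c" "E a b" "E b c" "E c a"
    for d a b c using mk_D4[OF assms(1) that] nh by blast
  interpret PTD V E using assms d4 by unfold_locales blast+
  obtain v0 where v0: "v0 \<in> V" using tourD(2)[OF assms(1)] by blast
  interpret PTD0 V E v0 using v0 by unfold_locales
  show "\<exists>n::nat. odd n \<and> n \<ge> 3 \<and> tourn_iso V E (T_V n) (T_E n)" by (rule result)
next
  assume "\<exists>n::nat. odd n \<and> n \<ge> 3 \<and> tourn_iso V E (T_V n) (T_E n)"
  then obtain n g where n: "odd n" and g: "\<forall>u\<in>V. \<forall>v\<in>V. E u v \<longleftrightarrow> T_E n (g u) (g v)"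
    unfolding tourn_iso_def by blast
  show "\<not> has_subtournament V E D4_V D4_E"
  proof
    assume "has_subtournament V E D4_V D4_E"
    then obtain S f where S: "S \<subseteq> V" and fb: "bij_betw f S D4_V"
      and fe: "\<forall>u\<in>S. \<forall>v\<in>S. E u v \<longleftrightarrow> D4_E (f u) (f v)"
      unfolding has_subtournament_def tourn_iso_def by blast
    have img: "f ` S = D4_V" using fb unfolding bij_betw_def by blast
    obtain a where a: "a \<in> S" "f a = 0" using img unfolding D4_V_def by (metis imageE insertI1)
    obtain b where b: "b \<in> S" "f b = 1" using img unfolding D4_V_def
      by (metis imageE insert_iff)
    obtain c where c: "c \<in> S" "f c = 2" using img unfolding D4_V_def
      by (metis imageE insert_iff)
    obtain d where d: "d \<in> S" "f d = 3" using img unfolding D4_V_def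
      by (metis imageE insert_iff)
    have "E d a" "E d b" "E d c" "E a b" "E b c" "E c a"
      using fe a b c d unfolding D4_E_def by auto
    hence "T_E n (g d) (g a)" "T_E n (g d) (g b)" "T_E n (g d) (g c)"
      "T_E n (g a) (g b)" "T_E n (g b) (g c)" "T_E n (g c) (g a)"
      using g a b c d S by blast+
    thus False using T_noD4[OF n] by blast
  qed
qed

end
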